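(* For an $E$-linear code $C$ of length $2n$, $$(SHull(C))_{Res}\subseteq SHull(C_{Res})\quad\text{and}\quad (SHull(C))_{Tor}\supseteq SHull(C_{Tor}).$$ Moreover, both inclusions are equalities if $C$ is free.
   Context: $E=\langle \kappa,\tau \mid 2\kappa=2\tau=0,\ \kappa^2=\kappa,\ \tau^2=\tau,\ \kappa\tau=\kappa,\ \tau\kappa=\tau\rangle$ is the non-unital ring $\{0,\kappa,\tau,\zeta\}$, $\zeta=\kappa+\tau$, with $e\kappa=e\tau=e$, $e\zeta=0$ for all $e\in E$. Every $e\in E$ is uniquely $u\kappa+v\zeta$ ($u,v\in\mathbb{F}_2$); $\pi(u\kappa+v\zeta)=u$, componentwise. An $E$-linear code of length $2n$ is a left $E$-submodule $C\subseteq E^{2n}$; $C_{Res}=\pi(C)$, $C_{Tor}=\{v\in\mathbb{F}_2^{2n}:\zeta v\in C\}$ (componentwise, $0\cdot\zeta=0,1\cdot\zeta=\zeta$); $C$ is free if $C_{Res}=C_{Tor}$. Symplectic inner product (over $E$ or $\mathbb{F}_2$): $\langle (u|v),(u'|v')\rangle_s=\sum_i u_iv'_i+\sum_i v_iu'_i$. For binary $B$: $B^{\perp_S}=\{z:\langle z,w\rangle_s=0\ \forall w\in B\}$, $SHull(B)=B\cap B^{\perp_S}$. For $E$-linear $C$: $C^{\perp_S}=\{z\in E^{2n}:\langle z,w\rangle_s=\langle w,z\rangle_s=0\ \forall w\in C\}$ and $SHull(C)=C\cap C^{\perp_S}$. *)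

theory Defs
  imports Main "HOL-Library.Z2" "HOL-Library.Product_Plus"
begin

text \<open>Every element is uniquely u*kappa + v*zeta
  with u, v in F2; we represent it by the pair (u, v). Addition is componentwise
  (F2-vector space with basis kappa, zeta).\<close>

type_synonym E = "bit \<times> bit"

definition kappa :: E where "kappa = (1, 0)"
definition zeta :: E where "zeta = (0, 1)"
definition tau :: E where "tau = (1, 1)"

text \<open>Multiplication: e*kappa = e*tau = e, e*zeta = 0, e*0 = 0; i.e. e*(u kappa + v zeta) = u e.\<close>
definition emul :: "E \<Rightarrow> E \<Rightarrow> E" where
  "emul e f = (if fst f = 1 then e else 0)"

definition epi :: "E \<Rightarrow> bit" where "epi e = fst e"

text \<open>Vectors of length m are functions on nat vanishing from index m on.\<close>
definition vecs :: "nat \<Rightarrow> (nat \<Rightarrow> 'a::zero) set" where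
  "vecs m = {x. \<forall>i\<ge>m. x i = 0}"

definition E_code :: "nat \<Rightarrow> (nat \<Rightarrow> E) set \<Rightarrow> bool" where
  "E_code n C \<longleftrightarrow> C \<subseteq> vecs (2*n) \<and> (\<lambda>i. 0) \<in> C
     \<and> (\<forall>x\<in>C. \<forall>y\<in>C. (\<lambda>i. x i + y i) \<in> C)
     \<and> (\<forall>e. \<forall>x\<in>C. (\<lambda>i. emul e (x i)) \<in> C)"

definition Res :: "(nat \<Rightarrow> E) set \<Rightarrow> (nat \<Rightarrow> bit) set" where
  "Res C = (\<lambda>x i. epi (x i)) ` C"

definition Tor :: "nat \<Rightarrow> (nat \<Rightarrow> E) set \<Rightarrow> (nat \<Rightarrow> bit) set" where
  "Tor n C = {v \<in> vecs (2*n). (\<lambda>i. if v i = 1 then zeta else 0) \<in> C}"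

definition free_code :: "nat \<Rightarrow> (nat \<Rightarrow> E) set \<Rightarrow> bool" where
  "free_code n C \<longleftrightarrow> Res C = Tor n C"

text \<open>Symplectic inner products for x = (u|v): u_i = x i, v_i = x (n+i).\<close>
definition symp_b :: "nat \<Rightarrow> (nat \<Rightarrow> bit) \<Rightarrow> (nat \<Rightarrow> bit) \<Rightarrow> bit" where
  "symp_b n x y = (\<Sum>i<n. x i * y (n+i)) + (\<Sum>i<n. x (n+i) * y i)"

definition symp_E :: "nat \<Rightarrow> (nat \<Rightarrow> E) \<Rightarrow> (nat \<Rightarrow> E) \<Rightarrow> E" where
  "symp_E n x y = (\<Sum>i<n. emul (x i) (y (n+i))) + (\<Sum>i<n. emul (x (n+i)) (y i))"

definition SHull_b :: "nat \<Rightarrow> (nat \<Rightarrow> bit) set \<Rightarrow> (nat \<Rightarrow> bit) set" where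
  "SHull_b n B = B \<inter> {z \<in> vecs (2*n). \<forall>w\<in>B. symp_b n z w = 0}"

definition SHull_E :: "nat \<Rightarrow> (nat \<Rightarrow> E) set \<Rightarrow> (nat \<Rightarrow> E) set" where
  "SHull_E n C = C \<inter> {z \<in> vecs (2*n). \<forall>w\<in>C. symp_E n z w = 0 \<and> symp_E n w z = 0}"

end

theory Submission
  imports Defs
begin

lemma emul_fst: "fst (emul e f) = fst e * fst f"
  by (cases "fst f = 1") (auto simp: emul_def)

lemma emul_snd: "snd (emul e f) = snd e * fst f"
  by (cases "fst f = 1") (auto simp: emul_def)

lemma symp_fst: "fst (symp_E n x y) = symp_b n (\<lambda>i. fst (x i)) (\<lambda>i. fst (y i))"
  unfolding symp_E_def symp_b_def fst_add fst_sum emul_fst ..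

lemma symp_snd: "snd (symp_E n x y) = symp_b n (\<lambda>i. snd (x i)) (\<lambda>i. fst (y i))"
  unfolding symp_E_def symp_b_def snd_add snd_sum emul_snd ..

lemma pair0: "(p::E) = 0 \<longleftrightarrow> fst p = 0 \<and> snd p = 0"
  by (simp add: prod_eq_iff)

lemma symp_b_sym: "symp_b n x y = symp_b n y x"
  unfolding symp_b_def by (simp only: mult.commute[of "x _"] add.commute)

lemma symp_b_zero: "symp_b n (\<lambda>i. 0) y = 0"
  by (simp add: symp_b_def)

lemma symp_b_zero2: "symp_b n x (\<lambda>i. 0) = 0"
  by (simp add: symp_b_def)

lemma epi_fun: "(\<lambda>i. epi (x i)) = (\<lambda>i. fst (x i))"
  by (simp add: epi_def)

lemma zeta_fst: "fst (if b = (1::bit) then zeta else 0) = 0"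
  by (simp add: zeta_def)

lemma zeta_snd: "snd (if b = (1::bit) then zeta else 0) = b"
  by (cases b) (auto simp: zeta_def)

lemma E_smul: "E_code n C \<Longrightarrow> x \<in> C \<Longrightarrow> (\<lambda>i. emul e (x i)) \<in> C"
  unfolding E_code_def by blast

lemma E_add: "E_code n C \<Longrightarrow> x \<in> C \<Longrightarrow> y \<in> C \<Longrightarrow> (\<lambda>i. x i + y i) \<in> C"
  unfolding E_code_def by blast

lemma E_vec: "E_code n C \<Longrightarrow> x \<in> C \<Longrightarrow> x \<in> vecs (2*n)"
  unfolding E_code_def by blast

lemma Res_sub_Tor:
  assumes "E_code n C" "w \<in> C"
  shows "(\<lambda>i. fst (w i)) \<in> Tor n C"
proof -
  have "(\<lambda>i. emul zeta (w i)) \<in> C" using assms E_smul E_vec by blast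
  moreover have "(\<lambda>i. emul zeta (w i)) = (\<lambda>i. if fst (w i) = 1 then zeta else 0)"
    by (auto simp: emul_def)
  moreover have "w \<in> vecs (2*n)" using assms E_smul E_vec by blast
  ultimately show ?thesis by (auto simp: Tor_def vecs_def)
qed

lemma snd_in_Tor:
  assumes "E_code n C" "w \<in> C"
  shows "(\<lambda>i. snd (w i)) \<in> Tor n C"
proof -
  have k: "(\<lambda>i. emul kappa (w i)) \<in> C" using assms E_smul E_vec by blast
  have "(\<lambda>i. w i + emul kappa (w i)) \<in> C" using assms k E_add by blast
  moreover have "(\<lambda>i. w i + emul kappa (w i)) = (\<lambda>i. if snd (w i) = 1 then zeta else 0)"
  proof
    fix i
    show "w i + emul kappa (w i) = (if snd (w i) = 1 then zeta else 0)"
      by (cases "fst (w i)"; cases "snd (w i)")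
        (auto simp: emul_def kappa_def zeta_def prod_eq_iff)
  qed
  moreover have "w \<in> vecs (2*n)" using assms E_smul E_vec by blast
  ultimately show ?thesis by (auto simp: Tor_def vecs_def)
qed


lemma zv_fst: "(\<lambda>i. fst (if v i = (1::bit) then zeta else 0)) = (\<lambda>i. 0)"
  using zeta_fst by auto

lemma zv_snd: "(\<lambda>i. snd (if v i = (1::bit) then zeta else 0)) = v"
  using zeta_snd by auto

lemma kap_fst: "(\<lambda>i. fst (emul kappa (w i))) = (\<lambda>i. fst (w i))"
proof
  fix i show "fst (emul kappa (w i)) = fst (w i)"
    by (cases "fst (w i)") (auto simp: emul_def kappa_def)
qed

lemma kap_snd: "(\<lambda>i. snd (emul kappa (w i))) = (\<lambda>i. 0)"
  by (simp add: emul_snd kappa_def)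

lemma fst_vec: "w \<in> vecs m \<Longrightarrow> (\<lambda>i. fst (w i)) \<in> vecs m"
  by (simp add: vecs_def)

lemma kap_vec: "w \<in> vecs m \<Longrightarrow> (\<lambda>i. emul kappa (w i)) \<in> vecs m"
  by (simp add: vecs_def emul_def)

lemma zv_vec: "v \<in> vecs m \<Longrightarrow> (\<lambda>i. if v i = (1::bit) then zeta else 0) \<in> vecs m"
  by (simp add: vecs_def)

lemma part2:
  assumes C: "E_code n C" and v: "v \<in> SHull_b n (Tor n C)"
  shows "v \<in> Tor n (SHull_E n C)"
proof -
  define zv where "zv = (\<lambda>i. if v i = (1::bit) then zeta else 0)"
  have vT: "v \<in> Tor n C" and vv: "v \<in> vecs (2*n)" and orth: "\<forall>w\<in>Tor n C. symp_b n v w = 0"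
    using v by (auto simp: SHull_b_def)
  have zC: "zv \<in> C" using vT by (simp add: Tor_def zv_def)
  have zvec: "zv \<in> vecs (2*n)" using vv zv_vec zv_def by metis
  have "\<forall>w\<in>C. symp_E n zv w = 0 \<and> symp_E n w zv = 0"
  proof
    fix w assume w: "w \<in> C"
    have o: "symp_b n v (\<lambda>i. fst (w i)) = 0" using orth Res_sub_Tor[OF C w] by blast
    show "symp_E n zv w = 0 \<and> symp_E n w zv = 0"
      unfolding pair0 symp_fst symp_snd zv_def zv_fst zv_snd
      using o by (simp add: symp_b_zero symp_b_zero2)
  qed
  then have "zv \<in> SHull_E n C" using zC zvec by (simp add: SHull_E_def)
  then show ?thesis using vv by (simp add: Tor_def zv_def)
qed

lemma part1:
  assumes C: "E_code n C" and x: "x \<in> Res (SHull_E n C)"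
  shows "x \<in> SHull_b n (Res C)"
proof -
  obtain z where z: "z \<in> C" "z \<in> vecs (2*n)" "\<forall>w\<in>C. symp_E n z w = 0 \<and> symp_E n w z = 0"
    and xz: "x = (\<lambda>i. fst (z i))"
    using x by (auto simp: Res_def SHull_E_def epi_def)
  have "x \<in> Res C" using z xz by (auto simp: Res_def epi_def)
  moreover have "x \<in> vecs (2*n)" using z xz fst_vec by metis
  moreover have "\<forall>y\<in>Res C. symp_b n x y = 0"
  proof
    fix y assume "y \<in> Res C"
    then obtain w where w: "w \<in> C" "y = (\<lambda>i. fst (w i))" by (auto simp: Res_def epi_def)
    then have "symp_E n z w = 0" using z by blast
    then show "symp_b n x y = 0" using w xz by (simp add: pair0 symp_fst)
  qed
  ultimately show ?thesis by (simp add: SHull_b_def)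
qed

lemma part3a:
  assumes C: "E_code n C" and F: "free_code n C" and v: "v \<in> SHull_b n (Res C)"
  shows "v \<in> Res (SHull_E n C)"
proof -
  have vR: "v \<in> Res C" and orth: "\<forall>w\<in>Res C. symp_b n v w = 0"
    using v by (auto simp: SHull_b_def)
  obtain w0 where w0: "w0 \<in> C" "v = (\<lambda>i. fst (w0 i))" using vR by (auto simp: Res_def epi_def)
  define z where "z = (\<lambda>i. emul kappa (w0 i))"
  have zC: "z \<in> C" using C w0 E_smul z_def by blast
  have zvec: "z \<in> vecs (2*n)" using C w0 E_vec kap_vec z_def by metis
  have zf: "(\<lambda>i. fst (z i)) = v" using w0 kap_fst z_def by simp
  have zs: "(\<lambda>i. snd (z i)) = (\<lambda>i. 0)" using kap_snd z_def by simp
  have "\<forall>w\<in>C. symp_E n z w = 0 \<and> symp_E n w z = 0"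
  proof
    fix w assume w: "w \<in> C"
    have r: "(\<lambda>i. fst (w i)) \<in> Res C" using w by (auto simp: Res_def epi_def)
    have s: "(\<lambda>i. snd (w i)) \<in> Res C" using snd_in_Tor[OF C w] F by (simp add: free_code_def)
    have o1: "symp_b n v (\<lambda>i. fst (w i)) = 0" using orth r by blast
    have o2: "symp_b n v (\<lambda>i. snd (w i)) = 0" using orth s by blast
    show "symp_E n z w = 0 \<and> symp_E n w z = 0"
      unfolding pair0 symp_fst symp_snd zf zs
      using o1 o2 symp_b_sym[of n v "\<lambda>i. fst (w i)"] symp_b_sym[of n v "\<lambda>i. snd (w i)"]
      by (simp add: symp_b_zero symp_b_zero2)
  qed
  then have "z \<in> SHull_E n C" using zC zvec by (simp add: SHull_E_def)
  then show ?thesis using zf unfolding Res_def epi_def by force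
qed

lemma part3b:
  assumes C: "E_code n C" and F: "free_code n C" and v: "v \<in> Tor n (SHull_E n C)"
  shows "v \<in> SHull_b n (Tor n C)"
proof -
  define zv where "zv = (\<lambda>i. if v i = (1::bit) then zeta else 0)"
  have vv: "v \<in> vecs (2*n)" and zS: "zv \<in> SHull_E n C" using v by (auto simp: Tor_def zv_def)
  have zC: "zv \<in> C" and orth: "\<forall>w\<in>C. symp_E n zv w = 0" using zS by (auto simp: SHull_E_def)
  have "v \<in> Tor n C" using vv zC by (simp add: Tor_def zv_def)
  moreover have "\<forall>y\<in>Tor n C. symp_b n v y = 0"
  proof
    fix y assume "y \<in> Tor n C"
    then have "y \<in> Res C" using F by (simp add: free_code_def)
    then obtain w where w: "w \<in> C" "y = (\<lambda>i. fst (w i))" by (auto simp: Res_def epi_def)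
    then have "symp_E n zv w = 0" using orth by blast
    then show "symp_b n v y = 0" using w unfolding pair0 symp_snd zv_def zv_snd by simp
  qed
  ultimately show ?thesis using vv by (simp add: SHull_b_def)
qed

theorem mainTheorem8:
  fixes n :: nat and C :: "(nat \<Rightarrow> E) set"
  assumes "E_code n C"
  shows "Res (SHull_E n C) \<subseteq> SHull_b n (Res C)
       \<and> SHull_b n (Tor n C) \<subseteq> Tor n (SHull_E n C)
       \<and> (free_code n C \<longrightarrow>
            Res (SHull_E n C) = SHull_b n (Res C) \<and> Tor n (SHull_E n C) = SHull_b n (Tor n C))"
  using part1[OF assms] part2[OF assms] part3a[OF assms] part3b[OF assms] by blast

end
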